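(* There exists an absolute constant $C>0$ such that the following holds. Let $B$ be a finite set of consecutive integers, let $1\le m\le|B|$ and let $I=(i_1,\dots,i_m)\subseteq B$ be an increasing sequence of integers. For an integer $s\ge1$ define $$\mathcal{J}'_{s,I}=\Big\{(j_1,\dots,j_m)\in\mathbb{Z}^m: \sum_{k=1}^m j_k=s,\ j_k\ge 0\text{ for all }k,\ j_{k+1}-j_k\le i_{k+1}-i_k\text{ for all }1\le k\le m-1\Big\}.$$ Then $$|\mathcal{J}'_{s,I}|\le\left(\frac{C}{m^2}\right)^{m-1}\left(s^{m-1}+(m|B|)^{m-1}\right).$$ *)

theory Defs
  imports Complex_Main
begin

definition Jprime :: "int \<Rightarrow> int list \<Rightarrow> int list set" where
  "Jprime s I = {js. length js = length I \<and> sum_list js = s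
      \<and> (\<forall>k < length I. js ! k \<ge> 0)
      \<and> (\<forall>k. k + 1 < length I \<longrightarrow> js ! (k+1) - js ! k \<le> I ! (k+1) - I ! k)}"

end

theory Submission
  imports Defs "HOL-Combinatorics.Multiset_Permutations"
begin


lemma ratio3: "(real n + 2) ^ (n+1) \<le> 3 * (real n + 1) ^ (n+1)"
proof -
  have "(real n + 2) / (real n + 1) = 1 + 1 / (real n + 1)" by (simp add: field_simps)
  also have "\<dots> \<le> exp (1 / (real n + 1))" by (rule exp_ge_add_one_self)
  finally have h: "(real n + 2) / (real n + 1) \<le> exp (1 / (real n + 1))" .
  have "((real n + 2) / (real n + 1)) ^ (n+1) \<le> exp (1 / (real n + 1)) ^ (n+1)"
    by (rule power_mono[OF h]) simp
  also have "\<dots> = exp (real (n+1) * (1 / (real n + 1)))" by (rule exp_of_nat_mult[symmetric])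
  also have "\<dots> = exp 1" by simp
  also have "\<dots> \<le> 3" by (rule exp_le)
  finally have "((real n + 2) / (real n + 1)) ^ (n+1) \<le> 3" .
  then have "(real n + 2) ^ (n+1) / (real n + 1) ^ (n+1) \<le> 3" by (metis power_divide)
  moreover have "(real n + 1) ^ (n+1) > 0" by simp
  ultimately show ?thesis using pos_divide_le_eq by blast
qed

lemma factbound: "(real n + 1) ^ n \<le> 3 ^ n * fact n"
proof (induction n)
  case 0 then show ?case by simp
next
  case (Suc n)
  have "(real (Suc n) + 1) ^ Suc n = (real n + 2) ^ (n+1)" by (simp add: add.commute)
  also have "\<dots> \<le> 3 * (real n + 1) ^ (n+1)" by (rule ratio3)
  also have "\<dots> = 3 * (real n + 1) * (real n + 1) ^ n" by simp
  also have "\<dots> \<le> 3 * (real n + 1) * (3 ^ n * fact n)"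
    using Suc.IH by (intro mult_left_mono) auto
  also have "\<dots> = 3 ^ Suc n * fact (Suc n)" by (simp add: algebra_simps)
  finally show ?case .
qed

lemma powsum: fixes s P :: real assumes "s \<ge> 0" "P \<ge> 0"
  shows "(s + 3*P) ^ n \<le> 6 ^ n * (s ^ n + P ^ n)"
proof -
  have m: "max s (3*P) ^ n \<le> s ^ n + 3^n * P ^ n"
    using assms by (cases "s \<le> 3*P") (auto simp: max_def power_mult_distrib)
  have t3: "s ^ n \<le> 3^n * s ^ n" using assms by (simp add: mult_le_cancel_right1)
  have "(s + 3*P) ^ n \<le> (2 * max s (3*P)) ^ n"
    using assms by (intro power_mono) auto
  also have "\<dots> = 2^n * max s (3*P) ^ n" by (simp only: power_mult_distrib)
  also have "\<dots> \<le> 2^n * (s ^ n + 3^n * P ^ n)" using m by simp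
  also have "\<dots> \<le> 2^n * (3^n * s ^ n + 3^n * P ^ n)"
    using t3 by simp
  also have "\<dots> = (2^n * 3^n) * (s ^ n + P ^ n)" by (simp only: distrib_left mult_ac)
  also have "(2::real)^n * 3^n = 6^n" by (simp only: power_mult_distrib[symmetric]) simp
  finally show ?thesis by simp
qed

lemma finalreal: fixes s P X c :: real and m n :: nat
  assumes "m = n + 1" "s \<ge> 0" "P \<ge> 0" "0 \<le> X" "X \<le> s + 3*P" "c * fact m * fact n \<le> X ^ n"
  shows "c \<le> (54 / real m ^ 2) ^ n * (s ^ n + P ^ n)"
proof -
  have f1: "(real m) ^ n \<le> 3 ^ n * fact n" using factbound[of n] assms(1) by (simp add: add.commute)
  have f2: "(real m) ^ n \<le> 3 ^ n * fact m"
    using f1 fact_mono[of n m, where 'a=real] assms(1) by (smt (verit) mult_left_mono zero_le_power le_add1)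
  have mm: "(real m ^ 2) ^ n \<le> 9 ^ n * (fact n * fact m)"
  proof -
    have "(real m ^ 2) ^ n = real m ^ n * real m ^ n" by (simp add: power_mult[symmetric] power2_eq_square power_mult_distrib)
    also have "\<dots> \<le> (3 ^ n * fact n) * (3 ^ n * fact m)" by (intro mult_mono f1 f2) auto
    also have "\<dots> = 9 ^ n * (fact n * fact m)" by (simp add: power_mult_distrib[symmetric] algebra_simps)
    finally show ?thesis .
  qed
  have pos: "fact m * fact n > (0::real)" by simp
  have "c \<le> X ^ n / (fact m * fact n)" using assms(6) pos by (simp add: field_simps)
  also have "\<dots> \<le> (6 ^ n * (s ^ n + P ^ n)) / (fact m * fact n)"
    using powsum[OF assms(2,3), of n] assms(4,5) power_mono[OF assms(5) assms(4)]
    by (intro divide_right_mono) (auto intro: order_trans)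
  also have "\<dots> \<le> (6 ^ n * (s ^ n + P ^ n)) * 9 ^ n / (real m ^ 2) ^ n"
  proof -
    have mp: "(real m ^ 2) ^ n > 0" using assms(1) by simp
    have "(6 ^ n * (s ^ n + P ^ n)) * (real m ^ 2) ^ n \<le> (6 ^ n * (s ^ n + P ^ n)) * (9 ^ n * (fact n * fact m))"
      using mm assms(2,3) by (intro mult_left_mono) auto
    thus ?thesis using mp pos by (simp add: field_simps)
  qed
  also have "\<dots> = 54 ^ n * (s ^ n + P ^ n) / (real m ^ 2) ^ n"
  proof -
    have e: "(54::real)^n = 6^n * 9^n" by (simp add: power_mult_distrib[symmetric])
    show ?thesis unfolding e by (simp only: mult_ac)
  qed
  also have "\<dots> = (54 / real m ^ 2) ^ n * (s ^ n + P ^ n)"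
    by (simp only: power_divide times_divide_eq_left)
  finally show ?thesis .
qed



lemma decr:
  assumes J: "js \<in> Jprime s I" and ij: "i \<le> j"
  shows "j < length I \<longrightarrow> js!j - I!j \<le> js!i - I!i"
  using ij
proof (induction j rule: dec_induct)
  case base then show ?case by simp
next
  case (step n)
  show ?case
  proof
    assume "Suc n < length I"
    with J have "js!(n+1) - js!n \<le> I!(n+1) - I!n" unfolding Jprime_def by auto
    with step.IH \<open>Suc n < length I\<close> show "js!Suc n - I!Suc n \<le> js!i - I!i" by simp
  qed
qed

lemma sorted_desc_unique:
  fixes w1 w2 :: "nat list"
  assumes "sorted_wrt (>) w1" "sorted_wrt (>) w2" "set w1 = set w2"
  shows "w1 = w2"
proof -
  have "sorted_wrt (<) (rev w1)" "sorted_wrt (<) (rev w2)" using assms(1,2) by (simp_all add: sorted_wrt_rev)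
  hence "sorted (rev w1)" "distinct (rev w1)" "sorted (rev w2)" "distinct (rev w2)"
    by (simp_all add: strict_sorted_iff)
  hence "rev w1 = rev w2" using sorted_distinct_set_unique assms(3) by (metis set_rev)
  thus ?thesis by simp
qed

lemma desc_distinct: fixes w :: "nat list" assumes "sorted_wrt (>) w" shows "distinct w"
proof -
  have "sorted_wrt (<) (rev w)" using assms by (simp add: sorted_wrt_rev)
  hence "distinct (rev w)" by (simp add: strict_sorted_iff)
  thus ?thesis by simp
qed

lemma countW:
  fixes T :: nat
  assumes "m \<ge> 1"
  shows "card {w::nat list. length w = m \<and> sorted_wrt (>) w \<and> sum_list w = T} * fact m * fact (m-1)
          \<le> (T + (m-1)) ^ (m-1)"
proof -
  define W where "W = {w::nat list. length w = m \<and> sorted_wrt (>) w \<and> sum_list w = T}"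
  define L where "L = {l::nat list. length l = m \<and> sum_list l = T}"
  have cL: "card L = (T + m - 1) choose T" unfolding L_def by (rule card_length_sum_list)
  have finL: "finite L" using cL assms by (intro card_ge_0_finite) simp
  have WL: "W \<subseteq> L" unfolding W_def L_def by auto
  have finW: "finite W" using finL WL finite_subset by blast
  have dW: "\<And>w. w \<in> W \<Longrightarrow> distinct w" unfolding W_def
    using desc_distinct by blast
  have U: "(\<Union>w\<in>W. permutations_of_set (set w)) \<subseteq> L"
  proof
    fix xs assume "xs \<in> (\<Union>w\<in>W. permutations_of_set (set w))"
    then obtain w where w: "w \<in> W" "set xs = set w" "distinct xs" by (auto dest: permutations_of_setD)
    have "length xs = length w" using w dW[OF w(1)] by (metis distinct_card)
    moreover have "sum_list xs = sum_list w" using w dW[OF w(1)] by (simp add: distinct_sum_list_conv_Sum)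
    ultimately show "xs \<in> L" using w(1) unfolding W_def L_def by auto
  qed
  have cU: "card (\<Union>w\<in>W. permutations_of_set (set w)) = (\<Sum>w\<in>W. card (permutations_of_set (set w)))"
  proof (rule card_UN_disjoint[OF finW])
    show "\<forall>w\<in>W. finite (permutations_of_set (set w))"
    proof
      fix w assume "w \<in> W"
      hence "permutations_of_set (set w) \<subseteq> L" using U by blast
      thus "finite (permutations_of_set (set w))" using finL finite_subset by blast
    qed
    show "\<forall>w1\<in>W. \<forall>w2\<in>W. w1 \<noteq> w2 \<longrightarrow> permutations_of_set (set w1) \<inter> permutations_of_set (set w2) = {}"
    proof (intro ballI impI)
      fix w1 w2 assume a: "w1 \<in> W" "w2 \<in> W" "w1 \<noteq> w2"
      have "set w1 \<noteq> set w2" using a sorted_desc_unique[of w1 w2] unfolding W_def by auto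
      thus "permutations_of_set (set w1) \<inter> permutations_of_set (set w2) = {}"
        by (auto dest: permutations_of_setD)
    qed
  qed
  have "(\<Sum>w\<in>W. card (permutations_of_set (set w))) = (\<Sum>w\<in>W. fact m)"
  proof (rule sum.cong)
    fix w assume "w \<in> W"
    thus "card (permutations_of_set (set w)) = fact m"
      using dW[of w] distinct_card[of w] unfolding W_def by simp
  qed simp
  hence "card W * fact m \<le> card L" using cU card_mono[OF finL U] by simp
  hence "card W * fact m * fact (m-1) \<le> ((T + m - 1) choose T) * fact (m-1)" using cL by simp
  also have "(T + m - 1) choose T = (T + (m-1)) choose (m-1)"
    using assms binomial_symmetric[of "m-1" "T + (m-1)"] by (simp add: add.commute)
  also have "((T + (m-1)) choose (m-1)) * fact (m-1) \<le> (T + (m-1)) ^ (m-1)" by (rule binomial_fact_pow)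
  finally show ?thesis unfolding W_def .
qed



lemma inj_part:
  assumes len: "length I = m" and sub: "set I \<subseteq> {a..b}" and m1: "m \<ge> 1"
  shows "card (Jprime s I) \<le> card {w::nat list. length w = m \<and> sorted_wrt (>) w \<and>
           sum_list w = nat (s + (\<Sum>k=0..<m. b - I!k + int (m-1-k)))}"
proof -
  define g where "g js k = js!k + b - I!k + int (m-1-k)" for js :: "int list" and k
  define f where "f js = map (\<lambda>k. nat (g js k)) [0..<m]" for js
  define T where "T = nat (s + (\<Sum>k=0..<m. b - I!k + int (m-1-k)))"
  define W where "W = {w::nat list. length w = m \<and> sorted_wrt (>) w \<and> sum_list w = T}"
  define L where "L = {l::nat list. length l = m \<and> sum_list l = T}"
  have cL: "card L = (T + m - 1) choose T" unfolding L_def by (rule card_length_sum_list)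
  have finL: "finite L" using cL m1 by (intro card_ge_0_finite) simp
  have finW: "finite W" using finL finite_subset[of W L] unfolding W_def L_def by auto
  have Ib: "\<And>k. k < m \<Longrightarrow> I!k \<le> b" using sub len nth_mem by fastforce
  have J: "\<And>js. js \<in> Jprime s I \<Longrightarrow> length js = m \<and> sum_list js = s \<and> (\<forall>k<m. js!k \<ge> 0)"
    using len unfolding Jprime_def by auto
  have gnn: "\<And>js k. js \<in> Jprime s I \<Longrightarrow> k < m \<Longrightarrow> g js k \<ge> 0"
    using J Ib unfolding g_def by fastforce
  have img: "f ` Jprime s I \<subseteq> W"
  proof
    fix w assume "w \<in> f ` Jprime s I"
    then obtain js where js: "js \<in> Jprime s I" and w: "w = f js" by blast
    have l: "length w = m" using w unfolding f_def by simp
    have srt: "sorted_wrt (>) w"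
      unfolding sorted_wrt_iff_nth_less
    proof (intro allI impI)
      fix i j assume ij: "i < j" "j < length w"
      hence jm: "j < m" using l by simp
      have d: "js!j - I!j \<le> js!i - I!i" using decr[OF js, of i j] ij len jm by simp
      have "g js j < g js i" using d ij jm unfolding g_def by simp
      thus "w!j < w!i" using w gnn[OF js jm] ij jm unfolding f_def by simp
    qed
    have "int (sum_list w) = (\<Sum>k=0..<m. int (nat (g js k)))"
      using w unfolding f_def by (simp add: sum_list_sum_nth)
    also have "\<dots> = (\<Sum>k=0..<m. g js k)" using gnn[OF js] by (intro sum.cong) auto
    also have "\<dots> = (\<Sum>k=0..<m. js!k) + (\<Sum>k=0..<m. b - I!k + int (m-1-k))"
      unfolding g_def by (simp add: sum.distrib[symmetric] algebra_simps)
    also have "(\<Sum>k=0..<m. js!k) = s" using J[OF js] by (metis sum_list_sum_nth)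
    finally have "int (sum_list w) = s + (\<Sum>k=0..<m. b - I!k + int (m-1-k))" .
    hence "sum_list w = T" unfolding T_def by simp
    thus "w \<in> W" using l srt unfolding W_def by simp
  qed
  have inj: "inj_on f (Jprime s I)"
  proof (rule inj_onI)
    fix x y assume x: "x \<in> Jprime s I" and y: "y \<in> Jprime s I" and e: "f x = f y"
    show "x = y"
    proof (rule nth_equalityI)
      show "length x = length y" using J[OF x] J[OF y] by simp
      fix k assume "k < length x"
      hence k: "k < m" using J[OF x] by simp
      have "nat (g x k) = nat (g y k)" using e k unfolding f_def
        by (metis (no_types, lifting) diff_zero length_map length_upt nth_map nth_upt add_0)
      hence "g x k = g y k" using gnn[OF x k] gnn[OF y k] by simp
      thus "x!k = y!k" unfolding g_def by simp
    qed
  qed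
  have "card (Jprime s I) \<le> card W" using card_inj_on_le[OF inj img finW] .
  thus ?thesis unfolding W_def T_def .
qed


theorem lemma4p7:
  shows "\<exists>C::real. C > 0 \<and>
    (\<forall>(a::int) (b::int) (m::nat) (I::int list) (s::int).
       a \<le> b \<longrightarrow> 1 \<le> m \<longrightarrow> m \<le> card {a..b} \<longrightarrow>
       length I = m \<longrightarrow> sorted_wrt (<) I \<longrightarrow> set I \<subseteq> {a..b} \<longrightarrow> s \<ge> 1 \<longrightarrow>
       real (card (Jprime s I)) \<le>
         (C / real m ^ 2) ^ (m - 1) *
         (real_of_int s ^ (m - 1) + (real m * real (card {a..b})) ^ (m - 1)))"
proof (intro exI[of _ 54] conjI allI impI)
  show "(54::real) > 0" by simp
  fix a b :: int and m :: nat and I :: "int list" and s :: int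
  assume ab: "a \<le> b" and m1: "1 \<le> m" and mN: "m \<le> card {a..b}" and len: "length I = m"
    and srt: "sorted_wrt (<) I" and sub: "set I \<subseteq> {a..b}" and s1: "s \<ge> 1"
  define N where "N = card {a..b}"
  have N: "int N = b - a + 1" using ab by (simp add: N_def)
  define Sg where "Sg = (\<Sum>k=0..<m. b - I!k + int (m-1-k))"
  define T where "T = nat (s + Sg)"
  have Ib: "\<And>k. k < m \<Longrightarrow> a \<le> I!k \<and> I!k \<le> b" using sub len nth_mem by fastforce
  have Sg0: "Sg \<ge> 0" unfolding Sg_def using Ib by (intro sum_nonneg) fastforce
  have "Sg \<le> (\<Sum>k=0..<m. b - a + int m)" unfolding Sg_def using Ib by (intro sum_mono) fastforce
  hence Sgle: "Sg \<le> int m * (b - a + int m)" by simp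
  have cnt: "card (Jprime s I) * fact m * fact (m-1) \<le> (T + (m-1))^(m-1)"
  proof -
    have "card (Jprime s I) * fact m * fact (m-1) \<le>
       card {w::nat list. length w = m \<and> sorted_wrt (>) w \<and> sum_list w = T} * fact m * fact (m-1)"
      using inj_part[OF len sub m1, of s] unfolding T_def Sg_def by simp
    also have "\<dots> \<le> (T + (m-1))^(m-1)" by (rule countW[OF m1])
    finally show ?thesis .
  qed
  have cntr: "real (card (Jprime s I)) * fact m * fact (m-1) \<le> (real T + real (m-1))^(m-1)"
  proof -
    have "real (card (Jprime s I) * fact m * fact (m-1)) \<le> real ((T + (m-1))^(m-1))"
      using cnt by (rule of_nat_mono)
    thus ?thesis by simp
  qed
  have "Sg + int (m-1) \<le> 3 * (int m * int N)"
  proof -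
    have mN': "int m \<le> int N" using mN N_def by linarith
    have "Sg \<le> int m * (int N - 1 + int m)" using Sgle N by simp
    also have "\<dots> \<le> int m * (2 * int N)" using mN' by (intro mult_left_mono) auto
    finally have A: "Sg \<le> int m * (2 * int N)" .
    have N1: "int N \<ge> 1" using N ab by simp
    have B: "int m \<le> int m * int N" using N1 by (simp add: mult_le_cancel_left1)
    have C: "int (m-1) \<le> int m" by simp
    have D: "int m * (2 * int N) = 2 * (int m * int N)" by (simp only: mult_ac)
    show ?thesis using A B C D by linarith
  qed
  hence "real_of_int (s + Sg + int (m-1)) \<le> real_of_int (s + 3 * (int m * int N))"
    by (simp only: of_int_le_iff)
  hence TX: "real T + real (m-1) \<le> real_of_int s + 3 * (real m * real N)"
    unfolding T_def using Sg0 s1 by simp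
  have "real (card (Jprime s I)) \<le> (54 / real m ^ 2) ^ (m-1) * (real_of_int s ^ (m-1) + (real m * real N) ^ (m-1))"
  proof (rule finalreal[OF _ _ _ _ TX cntr])
    show "m = m - 1 + 1" using m1 by simp
    show "0 \<le> real_of_int s" using s1 by simp
    show "0 \<le> real m * real N" by simp
    show "0 \<le> real T + real (m - 1)" by simp
  qed
  thus "real (card (Jprime s I)) \<le> (54 / real m ^ 2) ^ (m - 1) *
         (real_of_int s ^ (m - 1) + (real m * real (card {a..b})) ^ (m - 1))"
    unfolding N_def .
qed

end
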